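(* If $A\in S_n(\mathbb{F}_2)$ is an alternate matrix of rank $r>0$, then there exist linearly independent $\mathbf{x}_1,\ldots,\mathbf{x}_r\in\mathbb{F}_2^n$ with $A=\mathbf{x}_1\mathbf{x}_1^{\top}+\cdots+\mathbf{x}_r\mathbf{x}_r^{\top}+(\mathbf{x}_1+\cdots+\mathbf{x}_r)(\mathbf{x}_1+\cdots+\mathbf{x}_r)^{\top}$. Moreover, if $r$ is even and $A=\mathbf{y}_1\circ\mathbf{y}_2+\cdots+\mathbf{y}_{r-1}\circ\mathbf{y}_r$ for linearly independent $\mathbf{y}_1,\ldots,\mathbf{y}_r$, then the vectors $\mathbf{x}_1=\mathbf{y}_1$, $\mathbf{x}_2=\mathbf{y}_2$, and for $2\le k\le r/2$, $\mathbf{x}_{2k-1}=\mathbf{y}_1+\cdots+\mathbf{y}_{2k-2}+\mathbf{y}_{2k-1}$, $\mathbf{x}_{2k}=\mathbf{y}_1+\cdots+\mathbf{y}_{2k-2}+\mathbf{y}_{2k}$, have this property.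
   Context: $S_n(\mathbb{F}_2)$ is the set of symmetric $n\times n$ matrices over the binary field; such a matrix is alternate if its diagonal is zero. For $\mathbf{x},\mathbf{y}\in\mathbb{F}_2^n$, $\mathbf{x}\circ\mathbf{y}=\mathbf{x}\mathbf{y}^{\top}+\mathbf{y}\mathbf{x}^{\top}$. *)

theory Defs
  imports "HOL-Analysis.Analysis" "HOL-Library.Z2"
begin

text \<open>The binary field F_2 is the type bit (HOL-Library.Z2, a field).
  Vectors in F_2^n are bit ^ 'n, n x n matrices are bit ^ 'n ^ 'n.\<close>

definition outer :: "bit ^ 'n \<Rightarrow> bit ^ 'n \<Rightarrow> bit ^ 'n ^ 'n" where
  "outer x y = (\<chi> i j. x $ i * y $ j)"

definition circ :: "bit ^ 'n \<Rightarrow> bit ^ 'n \<Rightarrow> bit ^ 'n ^ 'n" where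
  "circ x y = outer x y + outer y x"

definition alternate :: "bit ^ 'n ^ 'n \<Rightarrow> bool" where
  "alternate A \<longleftrightarrow> transpose A = A \<and> (\<forall>i. A $ i $ i = 0)"

definition lin_indep_fam :: "(nat \<Rightarrow> bit ^ 'n) \<Rightarrow> nat \<Rightarrow> bool" where
  "lin_indep_fam x r \<longleftrightarrow> inj_on x {1..r} \<and> vec.independent (x ` {1..r})"

end

theory Submission
  imports Defs
begin

lemma bit_self: "(v::bit) + v = 0" by (cases v) simp_all
lemma bvec_self: "(v::bit^'n) + v = 0" by (simp add: vec_eq_iff bit_self del: add_bit_eq_xor)

definition xx :: "(nat \<Rightarrow> bit ^ 'n) \<Rightarrow> nat \<Rightarrow> bit ^ 'n" where
  "xx y i = (\<Sum>j = 1..2*((i+1) div 2) - 2. y j) + y i"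

lemma xx_odd: "xx y (2*m+1) = (\<Sum>j = 1..2*m. y j) + y (2*m+1)"
  unfolding xx_def by simp
lemma xx_even: "xx y (2*m+2) = (\<Sum>j = 1..2*m. y j) + y (2*m+2)"
  unfolding xx_def by simp

lemma sum2: "(\<Sum>i = 1..2*Suc m. f i) = (\<Sum>i = 1..2*m. f i) + f (2*m+1) + f (2*m+2)"
  for f :: "nat \<Rightarrow> 'a::comm_monoid_add"
proof -
  have "2*Suc m = Suc (Suc (2*m))" by simp
  then show ?thesis by (simp add: add.assoc)
qed

lemma sum_xx: "(\<Sum>i = 1..2*m. xx y i) = (\<Sum>i = 1..2*m. y i)"
proof (induction m)
  case 0 then show ?case by simp
next
  case (Suc m)
  let ?T = "\<Sum>i = 1..2*m. y i"
  have "(\<Sum>i = 1..2*Suc m. xx y i) = ?T + (?T + y (2*m+1)) + (?T + y (2*m+2))"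
    by (simp only: sum2 Suc xx_odd xx_even)
  also have "\<dots> = (?T + ?T) + (?T + y (2*m+1) + y (2*m+2))"
    by (simp only: add_ac)
  also have "\<dots> = ?T + y (2*m+1) + y (2*m+2)"
    by (simp only: bvec_self add_0)
  finally show ?case by (simp only: sum2)
qed

lemma key: "outer (T+a) (T+a) + outer (T+b) (T+b) + outer (T+a+b) (T+a+b) = outer T T + circ a b"
proof -
  have "\<And>(t1::bit) t2 a1 a2 b1 b2. (t1+a1)*(t2+a2) + (t1+b1)*(t2+b2) + (t1+a1+b1)*(t2+a2+b2) = t1*t2 + (a1*b2 + b1*a2)"
    subgoal for t1 t2 a1 a2 b1 b2
    by (cases t1; cases t2; cases a1; cases a2; cases b1; cases b2; simp)
    done
  then show ?thesis by (simp add: vec_eq_iff outer_def circ_def del: add_bit_eq_xor mult_bit_eq_and)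
qed

lemma main_id: "(\<Sum>i = 1..2*m. outer (xx y i) (xx y i)) + outer (\<Sum>i = 1..2*m. xx y i) (\<Sum>i = 1..2*m. xx y i)
   = (\<Sum>k = 1..m. circ (y (2*k - 1)) (y (2*k)))"
proof (induction m)
  case 0 then show ?case by (simp add: vec_eq_iff outer_def)
next
  case (Suc m)
  let ?T = "\<Sum>i = 1..2*m. y i"
  let ?L = "\<Sum>i = 1..2*m. outer (xx y i) (xx y i)"
  let ?C = "\<Sum>k = 1..m. circ (y (2*k - 1)) (y (2*k))"
  have IH: "?L + outer ?T ?T = ?C" using Suc by (simp only: sum_xx)
  have s: "(\<Sum>i = 1..2*Suc m. xx y i) = ?T + y (2*m+1) + y (2*m+2)"
    using sum_xx[of y "Suc m"] sum2[of y m] by simp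
  have "(\<Sum>i = 1..2*Suc m. outer (xx y i) (xx y i)) + outer (\<Sum>i = 1..2*Suc m. xx y i) (\<Sum>i = 1..2*Suc m. xx y i)
     = ?L + (outer (?T + y (2*m+1)) (?T + y (2*m+1)) + outer (?T + y (2*m+2)) (?T + y (2*m+2))
        + outer (?T + y (2*m+1) + y (2*m+2)) (?T + y (2*m+1) + y (2*m+2)))"
    unfolding s by (simp only: sum2[of "\<lambda>i. outer (xx y i) (xx y i)"] xx_odd xx_even add.assoc)
  also have "\<dots> = ?L + outer ?T ?T + circ (y (2*m+1)) (y (2*m+2))"
    using key[of ?T "y (2*m+1)" "y (2*m+2)"] by (simp only: add.assoc)
  also have "\<dots> = (\<Sum>k = 1..Suc m. circ (y (2*k - 1)) (y (2*k)))"
    using IH by simp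
  finally show ?case .
qed

lemma xx_inv: "y i = xx y i + (\<Sum>j = 1..2*((i+1) div 2) - 2. y j)"
proof -
  have "xx y i + (\<Sum>j = 1..2*((i+1) div 2) - 2. y j) = y i + ((\<Sum>j = 1..2*((i+1) div 2) - 2. y j) + (\<Sum>j = 1..2*((i+1) div 2) - 2. y j))"
    unfolding xx_def by (simp only: add_ac)
  then show ?thesis by (simp add: bvec_self)
qed

lemma xx_indep:
  assumes "lin_indep_fam y (2*m)"
  shows "lin_indep_fam (xx y) (2*m)"
proof -
  let ?I = "{1..2*m}"
  have inj: "inj_on y ?I" and ind: "vec.independent (y ` ?I)" using assms unfolding lin_indep_fam_def by auto
  have sub: "{1..2*((i+1) div 2) - 2} \<subseteq> {1..<i}" for i :: nat by auto
  have XY: "xx y ` ?I \<subseteq> vec.span (y ` ?I)"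
  proof
    fix v assume "v \<in> xx y ` ?I"
    then obtain i where i: "i \<in> ?I" "v = xx y i" by auto
    have "(\<Sum>j = 1..2*((i+1) div 2) - 2. y j) \<in> vec.span (y ` ?I)"
      apply (rule vec.span_sum) apply (rule vec.span_base) using sub[of i] i by auto
    moreover have "y i \<in> vec.span (y ` ?I)" using i by (intro vec.span_base) auto
    ultimately show "v \<in> vec.span (y ` ?I)" unfolding i xx_def by (rule vec.span_add)
  qed
  have "\<forall>i. i \<in> ?I \<longrightarrow> y i \<in> vec.span (xx y ` ?I)"
  proof (intro allI)
    fix i show "i \<in> ?I \<longrightarrow> y i \<in> vec.span (xx y ` ?I)"
    proof (induction i rule: less_induct)
      case (less i)
      show ?case
      proof
        assume i: "i \<in> ?I"
        have "(\<Sum>j = 1..2*((i+1) div 2) - 2. y j) \<in> vec.span (xx y ` ?I)"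
        proof (rule vec.span_sum)
          fix j assume j: "j \<in> {1..2*((i+1) div 2) - 2}"
          then have "j < i" "j \<in> ?I" using sub[of i] i by auto
          then show "y j \<in> vec.span (xx y ` ?I)" using less.IH by blast
        qed
        moreover have "xx y i \<in> vec.span (xx y ` ?I)" using i by (intro vec.span_base) auto
        ultimately show "y i \<in> vec.span (xx y ` ?I)" by (subst xx_inv) (rule vec.span_add)
      qed
    qed
  qed
  then have YX: "y ` ?I \<subseteq> vec.span (xx y ` ?I)" by auto
  have sp: "vec.span (xx y ` ?I) = vec.span (y ` ?I)"
    using XY YX by (simp add: vec.span_eq)
  have dY: "vec.dim (y ` ?I) = 2*m"
    using vec.dim_eq_card_independent[OF ind] card_image[OF inj] by simp
  have dX: "vec.dim (xx y ` ?I) = 2*m" using vec.span_eq_dim[OF sp] dY by simp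
  have cX: "card (xx y ` ?I) \<le> 2*m" using card_image_le[of ?I "xx y"] by simp
  have cd: "card (xx y ` ?I) \<le> vec.dim (xx y ` ?I)" using dX cX by linarith
  have indX: "vec.independent (xx y ` ?I)"
    apply (rule vec.card_le_dim_spanning[where V="xx y ` ?I"])
       apply (rule subset_refl)
      apply (rule vec.span_superset)
     apply simp
    by (rule cd)
  have "card (xx y ` ?I) = 2*m" using vec.dim_eq_card_independent[OF indX] dX by simp
  then have "inj_on (xx y) ?I" using inj_on_iff_eq_card[of ?I "xx y"] by simp
  then show ?thesis unfolding lin_indep_fam_def using indX by simp
qed

lemma bmat_self: "(M::bit^'n^'m) + M = 0" by (simp add: vec_eq_iff bit_self del: add_bit_eq_xor)

lemma row_circ: "(circ a b) $ t = a$t *s b + b$t *s a"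
  by (simp add: vec_eq_iff circ_def outer_def mult.commute del: add_bit_eq_xor mult_bit_eq_and)

lemma subspace_coord: "vec.subspace {w::'a::field^'n. w$i = 0}"
  by (simp add: vec.subspace_def)

lemma span_rows_zero:
  assumes "\<And>p q. A $ p $ q = A $ q $ p" "A $ i = 0"
  shows "vec.span (range (\<lambda>t. A$t)) \<subseteq> {w. w$i = 0}"
proof (rule vec.span_minimal[OF _ subspace_coord])
  show "range (\<lambda>t. A$t) \<subseteq> {w. w$i = 0}"
  proof
    fix w assume "w \<in> range (\<lambda>t. A$t)"
    then obtain t where "w = A$t" by auto
    then show "w \<in> {w. w$i = 0}" using assms(1)[of t i] assms(2) by simp
  qed
qed

lemma exists_decomp:
  fixes A :: "bit^'n^'n"
  assumes "alternate A"
  shows "\<exists>m y. lin_indep_fam y (2*m) \<and> A = (\<Sum>k = 1..m. circ (y (2*k - 1)) (y (2*k)))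
           \<and> y ` {1..2*m} \<subseteq> vec.span (range (\<lambda>t. A$t))"
  using assms
proof (induction "card {t. A$t \<noteq> 0}" arbitrary: A rule: less_induct)
  case less
  have sym: "A$p$q = A$q$p" for p q
    using less.prems unfolding alternate_def transpose_def vec_eq_iff by (metis vec_lambda_beta)
  have diag: "A$p$p = 0" for p using less.prems unfolding alternate_def by auto
  show ?case
  proof (cases "\<forall>t. A$t = 0")
    case True
    then have "A = 0" by (simp add: vec_eq_iff)
    then show ?thesis
      by (intro exI[of _ 0] exI[of _ "\<lambda>_. 0"]) (simp add: lin_indep_fam_def vec.independent_empty)
  next
    case False
    then obtain i where i: "A$i \<noteq> 0" by auto
    then obtain j where ij: "A$i$j = 1" by (auto simp: vec_eq_iff)
    define a where "a = A$i"
    define b where "b = A$j"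
    define A' where "A' = A + circ a b"
    have aj: "a$j = 1" and ai: "a$i = 0" and bi: "b$i = 1" and bj: "b$j = 0"
      using ij sym diag unfolding a_def b_def by metis+
    have rowA': "A'$t = A$t + A$i$t *s b + A$j$t *s a" for t
      unfolding A'_def by (simp add: row_circ a_def b_def add.assoc del: add_bit_eq_xor mult_bit_eq_and)
    have A'i: "A'$i = 0"
      using rowA'[of i] ai bi bvec_self[of a] unfolding a_def b_def by (simp add: diag sym del: add_bit_eq_xor mult_bit_eq_and)
    have A'j: "A'$j = 0"
      using rowA'[of j] aj bj bvec_self[of b] unfolding a_def b_def by (simp add: diag sym del: add_bit_eq_xor mult_bit_eq_and)
    have ent: "A'$p$q = A$p$q + (a$p * b$q + b$p * a$q)" for p q
      unfolding A'_def circ_def outer_def by simp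
    have symA': "A'$p$q = A'$q$p" for p q
      unfolding ent using sym by (simp add: mult.commute add.commute del: add_bit_eq_xor mult_bit_eq_and)
    have altA': "alternate A'"
      unfolding alternate_def transpose_def vec_eq_iff
      using symA' by (simp add: ent diag mult.commute bit_self del: add_bit_eq_xor mult_bit_eq_and)
    have AA': "A = A' + circ a b"
      unfolding A'_def by (simp add: add.assoc bmat_self)
    have sub: "{t. A'$t \<noteq> 0} \<subset> {t. A$t \<noteq> 0}"
    proof
      show "{t. A'$t \<noteq> 0} \<subseteq> {t. A$t \<noteq> 0}"
      proof
        fix t assume "t \<in> {t. A'$t \<noteq> 0}"
        moreover have "A$t = 0 \<Longrightarrow> A'$t = 0"
          using rowA'[of t] sym[of i t] sym[of j t] by simp
        ultimately show "t \<in> {t. A$t \<noteq> 0}" by auto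
      qed
      show "{t. A'$t \<noteq> 0} \<noteq> {t. A$t \<noteq> 0}" using i A'i by auto
    qed
    have "card {t. A'$t \<noteq> 0} < card {t. A$t \<noteq> 0}"
      by (rule psubset_card_mono[OF _ sub]) simp
    from less.hyps[OF this altA'] obtain m' y' where
      ind': "lin_indep_fam y' (2*m')" and A'eq: "A' = (\<Sum>k = 1..m'. circ (y' (2*k - 1)) (y' (2*k)))"
      and sp': "y' ` {1..2*m'} \<subseteq> vec.span (range (\<lambda>t. A'$t))" by blast
    define y where "y = y'(2*m'+1 := a, 2*m'+2 := b)"
    let ?S = "y' ` {1..2*m'}"
    have yy': "y ` {1..2*m'} = ?S" unfolding y_def by (intro image_cong) auto
    have Sspan: "vec.span ?S \<subseteq> vec.span (range (\<lambda>t. A'$t))"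
      using sp' by (simp add: vec.span_minimal vec.subspace_span)
    have spi: "vec.span (range (\<lambda>t. A'$t)) \<subseteq> {w. w$i = 0}"
      by (rule span_rows_zero[OF symA' A'i])
    have spj: "vec.span (range (\<lambda>t. A'$t)) \<subseteq> {w. w$j = 0}"
      by (rule span_rows_zero[OF symA' A'j])
    have a_notin: "a \<notin> vec.span ?S" using Sspan spj aj by auto
    have "vec.span (insert a ?S) \<subseteq> {w. w$i = 0}"
      apply (rule vec.span_minimal[OF _ subspace_coord])
      using ai sp' spi by auto
    then have b_notin: "b \<notin> vec.span (insert a ?S)" using bi by auto
    have indS: "vec.independent ?S" and injS: "inj_on y' {1..2*m'}"
      using ind' unfolding lin_indep_fam_def by auto
    have I: "{1..2*Suc m'} = insert (2*m'+2) (insert (2*m'+1) {1..2*m'})" by auto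
    have img: "y ` {1..2*Suc m'} = insert b (insert a ?S)"
      unfolding I image_insert yy' by (simp add: y_def)
    have indY: "vec.independent (y ` {1..2*Suc m'})"
      unfolding img
      by (intro vec.independent_insertI b_notin a_notin indS)
    have injy: "inj_on y {1..2*m'}"
      using injS inj_on_cong[of "{1..2*m'}" y y'] unfolding y_def by auto
    have sup1: "?S \<subseteq> vec.span ?S" by (rule vec.span_superset)
    have sup2: "insert a ?S \<subseteq> vec.span (insert a ?S)" by (rule vec.span_superset)
    have "a \<notin> ?S" using a_notin sup1 by (meson subsetD)
    moreover have "b \<notin> insert a ?S" using b_notin sup2 by (meson subsetD)
    ultimately have "card (y ` {1..2*Suc m'}) = card ?S + 2"
      unfolding img by simp
    also have "card ?S = 2*m'" using card_image[OF injS] by simp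
    finally have injY: "inj_on y {1..2*Suc m'}"
      using inj_on_iff_eq_card[of "{1..2*Suc m'}" y] by simp
    have fam: "lin_indep_fam y (2*Suc m')" unfolding lin_indep_fam_def using injY indY by simp
    have "(\<Sum>k = 1..Suc m'. circ (y (2*k - 1)) (y (2*k)))
          = (\<Sum>k = 1..m'. circ (y (2*k - 1)) (y (2*k))) + circ (y (2*Suc m' - 1)) (y (2*Suc m'))"
      by (simp add: sum.cl_ivl_Suc)
    also have "(\<Sum>k = 1..m'. circ (y (2*k - 1)) (y (2*k))) = (\<Sum>k = 1..m'. circ (y' (2*k - 1)) (y' (2*k)))"
      by (rule sum.cong) (auto simp: y_def)
    also have "circ (y (2*Suc m' - 1)) (y (2*Suc m')) = circ a b" by (simp add: y_def)
    finally have sumeq: "A = (\<Sum>k = 1..Suc m'. circ (y (2*k - 1)) (y (2*k)))"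
      using AA' A'eq by simp
    let ?R = "vec.span (range (\<lambda>t. A$t))"
    have aR: "a \<in> ?R" unfolding a_def by (rule vec.span_base) simp
    have bR: "b \<in> ?R" unfolding b_def by (rule vec.span_base) simp
    have "range (\<lambda>t. A'$t) \<subseteq> ?R"
    proof
      fix w assume "w \<in> range (\<lambda>t. A'$t)"
      then obtain t where t: "w = A'$t" by auto
      have "A$t \<in> ?R" by (rule vec.span_base) simp
      then show "w \<in> ?R" unfolding t rowA'
        by (intro vec.span_add vec.span_scale aR bR)
    qed
    then have "vec.span (range (\<lambda>t. A'$t)) \<subseteq> ?R"
      by (rule vec.span_minimal[OF _ vec.subspace_span])
    then have "y ` {1..2*Suc m'} \<subseteq> ?R" unfolding img using sp' aR bR by auto
    then show ?thesis using fam sumeq by blast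
  qed
qed


lemma rank_decomp:
  fixes A :: "bit^'n^'n"
  assumes fam: "lin_indep_fam y (2*m)" and Aeq: "A = (\<Sum>k = 1..m. circ (y (2*k - 1)) (y (2*k)))"
    and sp: "y ` {1..2*m} \<subseteq> vec.span (range (\<lambda>t. A$t))"
  shows "rank A = 2*m"
proof -
  have rows: "rows A = range (\<lambda>t. A$t)" by (auto simp: rows_def row_def)
  let ?Y = "y ` {1..2*m}"
  have mem1: "y (2*k - 1) \<in> ?Y" if "k \<in> {1..m}" for k
    using that by (intro rev_image_eqI[of "2*k - 1"]) auto
  have mem2: "y (2*k) \<in> ?Y" if "k \<in> {1..m}" for k
    using that by (intro rev_image_eqI[of "2*k"]) auto
  have "range (\<lambda>t. A$t) \<subseteq> vec.span ?Y"
  proof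
    fix w assume "w \<in> range (\<lambda>t. A$t)"
    then obtain t where t: "w = A$t" by auto
    have "A$t = (\<Sum>k = 1..m. y (2*k - 1) $ t *s y (2*k) + y (2*k) $ t *s y (2*k - 1))"
      by (subst Aeq) (simp add: row_circ del: add_bit_eq_xor mult_bit_eq_and)
    also have "\<dots> \<in> vec.span ?Y"
      by (intro vec.span_sum vec.span_add vec.span_scale vec.span_base mem1 mem2)
    finally show "w \<in> vec.span ?Y" unfolding t .
  qed
  then have speq: "vec.span (range (\<lambda>t. A$t)) = vec.span ?Y" using sp by (simp add: vec.span_eq)
  have ind: "vec.independent ?Y" and inj: "inj_on y {1..2*m}" using fam unfolding lin_indep_fam_def by auto
  have "rank A = vec.dim (range (\<lambda>t. A$t))" unfolding row_rank_def_gen rows ..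
  also have "\<dots> = vec.dim ?Y" by (rule vec.span_eq_dim[OF speq])
  also have "\<dots> = card ?Y" by (rule vec.dim_eq_card_independent[OF ind])
  also have "\<dots> = 2*m" using card_image[OF inj] by simp
  finally show ?thesis .
qed


lemma part2:
  fixes A :: "bit^'n^'n" and y x :: "nat \<Rightarrow> bit^'n"
  assumes ev: "even r" and fam: "lin_indep_fam y r"
    and Aeq: "A = (\<Sum>k = 1..r div 2. circ (y (2*k - 1)) (y (2*k)))"
    and x1: "x 1 = y 1" and x2: "x 2 = y 2"
    and xk: "\<forall>k. 2 \<le> k \<and> k \<le> r div 2 \<longrightarrow>
                   x (2*k - 1) = (\<Sum>j = 1..2*k - 2. y j) + y (2*k - 1)
                 \<and> x (2*k) = (\<Sum>j = 1..2*k - 2. y j) + y (2*k)"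
  shows "lin_indep_fam x r \<and>
                A = (\<Sum>i = 1..r. outer (x i) (x i))
                    + outer (\<Sum>i = 1..r. x i) (\<Sum>i = 1..r. x i)"
proof -
  obtain m where r: "r = 2*m" using ev by blast
  have m: "r div 2 = m" using r by simp
  have xeq: "x i = xx y i" if "i \<in> {1..r}" for i
  proof (cases "even i")
    case True
    then obtain k where i: "i = 2*k" by blast
    have k: "1 \<le> k" "k \<le> m" using that i r by auto
    show ?thesis
    proof (cases "k = 1")
      case True then show ?thesis using i x2 by (simp add: xx_def)
    next
      case False
      then have "x (2*k) = (\<Sum>j = 1..2*k - 2. y j) + y (2*k)" using xk k m by auto
      moreover have "(2*k+1) div 2 = k" by simp
      ultimately show ?thesis unfolding i xx_def by simp
    qed
  next
    case False
    then obtain k where i: "i = 2*k + 1" using oddE by blast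
    have k: "k + 1 \<le> m" using that i r by auto
    show ?thesis
    proof (cases "k = 0")
      case True then show ?thesis using i x1 by (simp add: xx_def)
    next
      case False
      then have "2 \<le> k+1 \<and> k+1 \<le> r div 2" using k m by auto
      then have "x (2*(k+1) - 1) = (\<Sum>j = 1..2*(k+1) - 2. y j) + y (2*(k+1) - 1)"
        using xk[rule_format, of "k+1"] by blast
      moreover have "2*(k+1) - 1 = i" "2*(k+1) - 2 = 2*k" using i by auto
      moreover have "(2*k+1+1) div 2 = k + 1" by simp
      ultimately show ?thesis unfolding xx_def by (simp add: i)
    qed
  qed
  have famxx: "lin_indep_fam (xx y) r" using xx_indep[where y=y and m=m] fam r by simp
  have "inj_on x {1..r} = inj_on (xx y) {1..r}" by (rule inj_on_cong) (rule xeq)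
  moreover have "x ` {1..r} = xx y ` {1..r}" by (rule image_cong) (auto intro: xeq)
  ultimately have famx: "lin_indep_fam x r" using famxx unfolding lin_indep_fam_def by simp
  have s1: "(\<Sum>i = 1..r. outer (x i) (x i)) = (\<Sum>i = 1..r. outer (xx y i) (xx y i))"
    by (rule sum.cong) (auto simp: xeq)
  have s2: "(\<Sum>i = 1..r. x i) = (\<Sum>i = 1..r. xx y i)"
    by (rule sum.cong) (auto simp: xeq)
  have "A = (\<Sum>i = 1..r. outer (x i) (x i)) + outer (\<Sum>i = 1..r. x i) (\<Sum>i = 1..r. x i)"
    apply (simp only: s1 s2)
    using main_id[where y=y and m=m] by (simp add: Aeq m r)
  then show ?thesis using famx by simp
qed

theorem lemma3p7:
  fixes A :: "bit ^ 'n ^ 'n" and r :: nat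
  assumes "alternate A" and "rank A = r" and "r > 0"
  shows "(\<exists>x :: nat \<Rightarrow> bit ^ 'n. lin_indep_fam x r \<and>
            A = (\<Sum>i = 1..r. outer (x i) (x i))
                + outer (\<Sum>i = 1..r. x i) (\<Sum>i = 1..r. x i))
       \<and> (\<forall>(y :: nat \<Rightarrow> bit ^ 'n) (x :: nat \<Rightarrow> bit ^ 'n).
            even r \<and> lin_indep_fam y r
            \<and> A = (\<Sum>k = 1..r div 2. circ (y (2*k - 1)) (y (2*k)))
            \<and> x 1 = y 1 \<and> x 2 = y 2
            \<and> (\<forall>k. 2 \<le> k \<and> k \<le> r div 2 \<longrightarrow>
                   x (2*k - 1) = (\<Sum>j = 1..2*k - 2. y j) + y (2*k - 1)
                 \<and> x (2*k) = (\<Sum>j = 1..2*k - 2. y j) + y (2*k))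
            \<longrightarrow> lin_indep_fam x r \<and>
                A = (\<Sum>i = 1..r. outer (x i) (x i))
                    + outer (\<Sum>i = 1..r. x i) (\<Sum>i = 1..r. x i))"
proof
  obtain m y where fam: "lin_indep_fam y (2*m)" and Aeq: "A = (\<Sum>k = 1..m. circ (y (2*k - 1)) (y (2*k)))"
    and sp: "y ` {1..2*m} \<subseteq> vec.span (range (\<lambda>t. A$t))"
    using exists_decomp[OF assms(1)] by blast
  have r: "r = 2*m" using rank_decomp[OF fam Aeq sp] assms(2) by simp
  have m: "r div 2 = m" using r by simp
  have "\<forall>k. 2 \<le> k \<and> k \<le> r div 2 \<longrightarrow>
                   xx y (2*k - 1) = (\<Sum>j = 1..2*k - 2. y j) + y (2*k - 1)
                 \<and> xx y (2*k) = (\<Sum>j = 1..2*k - 2. y j) + y (2*k)"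
  proof (intro allI impI)
    fix k :: nat assume "2 \<le> k \<and> k \<le> r div 2"
    then have "(2*k - 1 + 1) div 2 = k" "(2*k + 1) div 2 = k" by auto
    then show "xx y (2*k - 1) = (\<Sum>j = 1..2*k - 2. y j) + y (2*k - 1)
                 \<and> xx y (2*k) = (\<Sum>j = 1..2*k - 2. y j) + y (2*k)"
      unfolding xx_def by simp
  qed
  moreover have "xx y 1 = y 1" "xx y 2 = y 2" by (simp_all add: xx_def)
  ultimately have "lin_indep_fam (xx y) r \<and>
                A = (\<Sum>i = 1..r. outer (xx y i) (xx y i))
                    + outer (\<Sum>i = 1..r. xx y i) (\<Sum>i = 1..r. xx y i)"
    using part2[of r y A "xx y"] fam Aeq r m by simp
  then show "\<exists>x :: nat \<Rightarrow> bit ^ 'n. lin_indep_fam x r \<and>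
            A = (\<Sum>i = 1..r. outer (x i) (x i))
                + outer (\<Sum>i = 1..r. x i) (\<Sum>i = 1..r. x i)" by blast
next
  show "\<forall>(y :: nat \<Rightarrow> bit ^ 'n) (x :: nat \<Rightarrow> bit ^ 'n).
            even r \<and> lin_indep_fam y r
            \<and> A = (\<Sum>k = 1..r div 2. circ (y (2*k - 1)) (y (2*k)))
            \<and> x 1 = y 1 \<and> x 2 = y 2
            \<and> (\<forall>k. 2 \<le> k \<and> k \<le> r div 2 \<longrightarrow>
                   x (2*k - 1) = (\<Sum>j = 1..2*k - 2. y j) + y (2*k - 1)
                 \<and> x (2*k) = (\<Sum>j = 1..2*k - 2. y j) + y (2*k))
            \<longrightarrow> lin_indep_fam x r \<and>
                A = (\<Sum>i = 1..r. outer (x i) (x i))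
                    + outer (\<Sum>i = 1..r. x i) (\<Sum>i = 1..r. x i)"
    using part2 by blast
qed

end
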